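(* Let $\mathbb{K}$ be a field, let $P_1, P_2 \in \mathbb{K}[X]$ be irreducible polynomials with $P_1' \neq 0$ and $P_2' \neq 0$, and let $k \geq 1$ be an integer. Then $\mathbb{K}[X]/(P_1^k)$ and $\mathbb{K}[X]/(P_2^k)$ are isomorphic as $\mathbb{K}$-algebras if and only if $\mathbb{K}[X]/(P_1)$ and $\mathbb{K}[X]/(P_2)$ are isomorphic as $\mathbb{K}$-algebras.
   Context: $\mathbb{K}$ is an arbitrary field; $P'$ denotes the formal derivative (for irreducible $P$, $P'\neq0$ means $P$ is separable). *)

theory Defs
  imports "HOL-Computational_Algebra.Polynomial"
begin

text \<open>The quotient algebra K[X]/(P), represented by canonical representatives
  (remainders modulo P), with the induced operations.\<close>

definition qrep :: "'a::field poly \<Rightarrow> 'a poly set" where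
  "qrep P = {r. r mod P = r}"

definition kalg_iso :: "'a::field poly \<Rightarrow> 'a poly \<Rightarrow> ('a poly \<Rightarrow> 'a poly) \<Rightarrow> bool" where
  "kalg_iso P Q f \<longleftrightarrow>
     bij_betw f (qrep P) (qrep Q) \<and>
     (\<forall>r\<in>qrep P. \<forall>s\<in>qrep P. f (r + s) = f r + f s) \<and>
     (\<forall>r\<in>qrep P. \<forall>s\<in>qrep P. f ((r * s) mod P) = (f r * f s) mod Q) \<and>
     f (1 mod P) = 1 mod Q \<and>
     (\<forall>c. \<forall>r\<in>qrep P. f (smult c r) = smult c (f r))"

definition quot_alg_isomorphic :: "'a::field poly \<Rightarrow> 'a poly \<Rightarrow> bool" where
  "quot_alg_isomorphic P Q \<longleftrightarrow> (\<exists>f. kalg_iso P Q f)"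

end

theory Submission
  imports Defs
begin

lemma comp_cong:
  fixes M a b p :: "'a::field poly"
  assumes "M dvd a - b"
  shows "M dvd pcompose p a - pcompose p b"
proof (induction p rule: pCons_induct)
  case 0
  then show ?case by simp
next
  case (pCons c p)
  have "pcompose (pCons c p) a - pcompose (pCons c p) b
        = a * (pcompose p a - pcompose p b) + (a - b) * pcompose p b"
    by (simp add: pcompose_pCons algebra_simps)
  then show ?case using pCons assms by (simp add: dvd_add)
qed

lemma taylor:
  fixes a t p :: "'a::field poly"
  shows "t^2 dvd pcompose p (a + t) - pcompose p a - t * pcompose (pderiv p) a"
proof (induction p rule: pCons_induct)
  case 0
  then show ?case by simp
next
  case (pCons c p)
  have e: "pcompose (pCons c p) (a + t) - pcompose (pCons c p) a - t * pcompose (pderiv (pCons c p)) a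
     = a * (pcompose p (a + t) - pcompose p a - t * pcompose (pderiv p) a)
       + t * (pcompose p (a + t) - pcompose p a)"
    by (simp add: pcompose_pCons pderiv_pCons pcompose_add algebra_simps)
  have "t dvd pcompose p (a + t) - pcompose p a"
    by (rule comp_cong) simp
  then have "t * t dvd t * (pcompose p (a + t) - pcompose p a)"
    by (rule mult_dvd_mono[OF dvd_refl])
  then have "t^2 dvd t * (pcompose p (a + t) - pcompose p a)"
    by (simp add: power2_eq_square)
  then show ?case using pCons e by (simp add: dvd_add)
qed

lemma comp_power:
  fixes p g :: "'a::field poly"
  shows "pcompose (p ^ n) g = (pcompose p g) ^ n"
  by (induction n) (simp_all add: pcompose_1 pcompose_mult)


lemma bezout_irr:
  fixes P a :: "'a::field poly"
  assumes irr: "irreducible P" and nd: "\<not> P dvd a"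
  shows "\<exists>u v. u * a + v * P = 1"
proof -
  define S where "S = {w. w \<noteq> 0 \<and> (\<exists>u v. w = u * a + v * P)}"
  have "a \<noteq> 0" using nd by auto
  moreover have "a = 1 * a + 0 * P" by simp
  ultimately have "a \<in> S" unfolding S_def by blast
  define n where "n = (LEAST n. \<exists>w\<in>S. degree w = n)"
  have "\<exists>w\<in>S. degree w = n" unfolding n_def
    by (rule LeastI_ex) (use \<open>a \<in> S\<close> in blast)
  then obtain d where dS: "d \<in> S" and dn: "degree d = n" by blast
  have dmin: "degree d \<le> degree w" if "w \<in> S" for w
    using that unfolding dn n_def by (auto intro: Least_le)
  from dS obtain u0 v0 where d: "d = u0 * a + v0 * P" and d0: "d \<noteq> 0" unfolding S_def by blast
  have divs: "d dvd (u * a + v * P)" for u v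
  proof (rule ccontr)
    assume nd': "\<not> d dvd (u * a + v * P)"
    let ?w = "u * a + v * P"
    have "?w mod d = ?w - (?w div d) * d" by (simp add: minus_div_mult_eq_mod)
    also have "\<dots> = (u - (?w div d) * u0) * a + (v - (?w div d) * v0) * P"
      unfolding d by (simp add: algebra_simps)
    finally have "?w mod d = (u - (?w div d) * u0) * a + (v - (?w div d) * v0) * P" .
    moreover have "?w mod d \<noteq> 0" using nd' by (simp add: dvd_eq_mod_eq_0)
    ultimately have "?w mod d \<in> S" unfolding S_def by blast
    then have "degree d \<le> degree (?w mod d)" by (rule dmin)
    moreover have "degree (?w mod d) < degree d"
      using degree_mod_less[OF d0, of ?w] \<open>?w mod d \<noteq> 0\<close> by simp
    ultimately show False by simp
  qed
  have "d dvd P" using divs[of 0 1] by simp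
  have "d dvd a" using divs[of 1 0] by simp
  from \<open>d dvd P\<close> obtain c where Pc: "P = d * c" by (auto elim: dvdE)
  have "is_unit d \<or> is_unit c" using irr Pc by (auto dest: irreducibleD)
  moreover have "\<not> is_unit c"
  proof
    assume "is_unit c"
    then have "P dvd d" using Pc by (metis dvd_mult_unit_iff dvd_refl)
    then show False using \<open>d dvd a\<close> nd dvd_trans by blast
  qed
  ultimately have "is_unit d" by blast
  then obtain e where "1 = d * e" by (auto elim: dvdE)
  then have "(e * u0) * a + (e * v0) * P = 1" using d by (simp add: algebra_simps)
  then show ?thesis by blast
qed

lemma irr_prime:
  fixes P x y :: "'a::field poly"
  assumes irr: "irreducible P" and "P dvd x * y" and "\<not> P dvd x"
  shows "P dvd y"
proof -
  obtain u v where uv: "u * x + v * P = 1" using bezout_irr[OF irr assms(3)] by blast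
  have "y = (u * x + v * P) * y" using uv by simp
  also have "\<dots> = u * (x * y) + P * (v * y)" by (simp add: algebra_simps)
  also have "P dvd \<dots>" using assms(2) by (simp add: dvd_add)
  finally show ?thesis .
qed

lemma irr_prime_power:
  fixes P x :: "'a::field poly"
  assumes irr: "irreducible P" and "P dvd x ^ n"
  shows "P dvd x"
  using assms(2)
proof (induction n)
  case 0
  then show ?case using irr by (simp add: irreducible_def)
next
  case (Suc n)
  then show ?case using irr_prime[OF irr, of x "x^n"] by auto
qed


lemma hmod:
  fixes M N g r :: "'a::field poly"
  assumes "N dvd pcompose M g"
  shows "pcompose (r mod M) g mod N = pcompose r g mod N"
proof -
  have "pcompose r g = pcompose (r div M) g * pcompose M g + pcompose (r mod M) g"
    using div_mult_mod_eq[of r M] by (metis pcompose_add pcompose_mult)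
  then have "pcompose r g - pcompose (r mod M) g = pcompose (r div M) g * pcompose M g"
    by simp
  then have "N dvd pcompose r g - pcompose (r mod M) g" using assms by simp
  then show ?thesis by (metis dvd_minus_iff minus_diff_eq mod_eq_dvd_iff)
qed

lemma hom_props:
  fixes M N g :: "'a::field poly"
  assumes "N dvd pcompose M g"
  defines "F \<equiv> (\<lambda>r. pcompose r g mod N)"
  shows "(\<forall>r\<in>qrep M. \<forall>s\<in>qrep M. F (r + s) = F r + F s) \<and>
     (\<forall>r\<in>qrep M. \<forall>s\<in>qrep M. F ((r * s) mod M) = (F r * F s) mod N) \<and>
     F (1 mod M) = 1 mod N \<and>
     (\<forall>c. \<forall>r\<in>qrep M. F (smult c r) = smult c (F r))"
proof (intro conjI ballI allI)
  fix r s assume "r \<in> qrep M" "s \<in> qrep M"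
  show "F (r + s) = F r + F s" unfolding F_def by (simp add: pcompose_add poly_mod_add_left)
  show "F ((r * s) mod M) = (F r * F s) mod N" unfolding F_def
    using hmod[OF assms(1), of "r * s"] by (simp add: pcompose_mult mod_mult_eq)
next
  show "F (1 mod M) = 1 mod N" unfolding F_def
    using hmod[OF assms(1), of 1] by (simp add: pcompose_1)
next
  fix c r assume "r \<in> qrep M"
  show "F (smult c r) = smult c (F r)" unfolding F_def by (simp add: pcompose_smult mod_smult_left)
qed

definition isodata :: "'a::field poly \<Rightarrow> 'a poly \<Rightarrow> 'a poly \<Rightarrow> 'a poly \<Rightarrow> bool" where
  "isodata M N g s \<longleftrightarrow> N dvd pcompose M g \<and> M dvd pcompose N s \<and>
     N dvd pcompose s g - [:0,1:] \<and> M dvd pcompose g s - [:0,1:]"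

lemma qrep_mod: "(r mod M) \<in> qrep M"
  unfolding qrep_def by simp

lemma iso_extract:
  fixes M N :: "'a::field poly"
  assumes iso: "kalg_iso M N f"
  shows "\<exists>g s. isodata M N g s"
proof -
  define X :: "'a poly" where "X = [:0,1:]"
  define g where "g = f (X mod M)"
  from iso have bij: "bij_betw f (qrep M) (qrep N)"
    and add: "\<forall>r\<in>qrep M. \<forall>s\<in>qrep M. f (r + s) = f r + f s"
    and mul: "\<forall>r\<in>qrep M. \<forall>s\<in>qrep M. f ((r * s) mod M) = (f r * f s) mod N"
    and one: "f (1 mod M) = 1 mod N"
    and sm: "\<forall>c. \<forall>r\<in>qrep M. f (smult c r) = smult c (f r)"
    unfolding kalg_iso_def by blast+
  have inj: "inj_on f (qrep M)" and img: "f ` qrep M = qrep N"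
    using bij by (auto simp: bij_betw_def)
  have z: "0 \<in> qrep M" unfolding qrep_def by simp
  have f0: "f 0 = 0" using add z by (metis add.right_neutral add_left_cancel)
  have formula: "f (r mod M) = pcompose r g mod N" for r
  proof (induction r rule: pCons_induct)
    case 0
    then show ?case using f0 by simp
  next
    case (pCons c p)
    have e1: "pCons c p = smult c 1 + X * p" unfolding X_def
      by (simp add: one_pCons)
    have "pCons c p mod M = smult c 1 mod M + ((X mod M) * (p mod M)) mod M"
      unfolding e1 by (simp only: poly_mod_add_left mod_mult_eq)
    then have "pCons c p mod M = smult c (1 mod M) + ((X mod M) * (p mod M)) mod M"
      by (simp only: mod_smult_left)
    moreover have q1: "smult c (1 mod M) \<in> qrep M" unfolding qrep_def by (simp add: mod_smult_left)
    moreover have q2: "((X mod M) * (p mod M)) mod M \<in> qrep M" by (rule qrep_mod)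
    ultimately have "f (pCons c p mod M) = f (smult c (1 mod M)) + f (((X mod M) * (p mod M)) mod M)"
      using add by simp
    also have "\<dots> = smult c (1 mod N) + (g * (pcompose p g mod N)) mod N"
    proof -
      have "f (smult c (1 mod M)) = smult c (f (1 mod M))" using sm qrep_mod by blast
      moreover have "f (((X mod M) * (p mod M)) mod M) = (f (X mod M) * f (p mod M)) mod N"
        using mul qrep_mod by blast
      ultimately show ?thesis using one pCons.IH unfolding g_def by simp
    qed
    also have "\<dots> = pcompose (pCons c p) g mod N"
      by (simp add: pcompose_pCons poly_mod_add_left mod_mult_right_eq)
        (metis mod_smult_left mult.right_neutral smult_one)
    finally show ?case .
  qed
  have gN: "g \<in> qrep N" using img qrep_mod unfolding g_def by blast
  then have gg: "g mod N = g" unfolding qrep_def by simp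
  have c1: "N dvd pcompose M g"
    using formula[of M] f0 by (simp add: dvd_eq_mod_eq_0)
  have "X mod N \<in> f ` qrep M" using img qrep_mod by blast
  then obtain s where sM: "s \<in> qrep M" and fs: "f s = X mod N" by (metis imageE)
  have "s mod M = s" using sM unfolding qrep_def by simp
  then have "pcompose s g mod N = X mod N" using formula[of s] fs by simp
  then have c3: "N dvd pcompose s g - X" by (simp add: mod_eq_dvd_iff)
  have "f (pcompose N s mod M) = pcompose N (pcompose s g) mod N"
    using formula by (simp add: pcompose_assoc)
  also have "\<dots> = pcompose N X mod N"
    using comp_cong[OF c3, of N] by (simp add: mod_eq_dvd_iff)
  also have "\<dots> = 0" unfolding X_def by simp
  finally have "f (pcompose N s mod M) = f 0" using f0 by simp
  then have "pcompose N s mod M = 0" using inj qrep_mod z by (auto dest: inj_onD)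
  then have c2: "M dvd pcompose N s" by (simp add: dvd_eq_mod_eq_0)
  have "f (pcompose g s mod M) = pcompose g (pcompose s g) mod N"
    using formula by (simp add: pcompose_assoc)
  also have "\<dots> = pcompose g X mod N"
    using comp_cong[OF c3, of g] by (simp add: mod_eq_dvd_iff)
  also have "\<dots> = f (X mod M)" unfolding X_def using gg g_def X_def by simp
  finally have "pcompose g s mod M = X mod M" using inj qrep_mod by (auto dest: inj_onD)
  then have c4: "M dvd pcompose g s - X" by (simp add: mod_eq_dvd_iff)
  show ?thesis using c1 c2 c3 c4 unfolding isodata_def X_def by blast
qed


lemma descent:
  fixes P Q g s :: "'a::field poly"
  assumes irrP: "irreducible P" and irrQ: "irreducible Q" and k: "k \<ge> 1"
    and d: "isodata (P ^ k) (Q ^ k) g s"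
  shows "isodata P Q g s"
proof -
  have QQ: "Q dvd Q ^ k" and PP: "P dvd P ^ k" using k by (simp_all add: dvd_power)
  have "Q ^ k dvd (pcompose P g) ^ k" using d unfolding isodata_def by (simp add: comp_power)
  then have c1: "Q dvd pcompose P g" using QQ irr_prime_power[OF irrQ] dvd_trans by blast
  have "P ^ k dvd (pcompose Q s) ^ k" using d unfolding isodata_def by (simp add: comp_power)
  then have c2: "P dvd pcompose Q s" using PP irr_prime_power[OF irrP] dvd_trans by blast
  show ?thesis using c1 c2 d QQ PP dvd_trans unfolding isodata_def by blast
qed

lemma construct:
  fixes P Q g0 s :: "'a::field poly"
  assumes irrP: "irreducible P" and irrQ: "irreducible Q" and dP: "pderiv P \<noteq> 0"
    and d: "isodata P Q g0 s"
  shows "quot_alg_isomorphic (P ^ k) (Q ^ k)"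
proof -
  define X :: "'a poly" where "X = [:0,1:]"
  have P0: "P \<noteq> 0" and Q0: "Q \<noteq> 0" using irrP irrQ by auto
  have degP: "degree P \<noteq> 0"
    using irrP P0 by (metis irreducible_def is_unit_iff_degree)
  from d have d1: "Q dvd pcompose P g0" and d2: "P dvd pcompose Q s"
    and d3: "Q dvd pcompose s g0 - X" and d4: "P dvd pcompose g0 s - X"
    unfolding isodata_def X_def by blast+
  have nQd: "\<not> Q dvd pcompose (pderiv P) g0"
  proof
    assume "Q dvd pcompose (pderiv P) g0"
    then obtain w where w: "pcompose (pderiv P) g0 = Q * w" by (auto elim: dvdE)
    have "pcompose (pcompose (pderiv P) g0) s = pcompose Q s * pcompose w s"
      by (simp add: w pcompose_mult)
    then have "P dvd pcompose (pcompose (pderiv P) g0) s" using d2 by simp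
    then have A: "P dvd pcompose (pderiv P) (pcompose g0 s)" by (simp add: pcompose_assoc)
    have B: "P dvd pcompose (pderiv P) (pcompose g0 s) - pcompose (pderiv P) X"
      by (rule comp_cong[OF d4])
    have "P dvd pderiv P" using dvd_diff[OF A B] unfolding X_def by simp
    then have "degree P \<le> degree (pderiv P)" using dP by (rule dvd_imp_degree_le)
    moreover have "degree (pderiv P) \<le> degree P - 1"
      by (rule degree_le) (simp add: coeff_eq_0 coeff_pderiv)
    ultimately show False using degP by simp
  qed
  obtain g where e1: "Q dvd pcompose P g" and e2: "P dvd pcompose Q s"
    and e3: "Q dvd pcompose s g - X" and e4: "P dvd pcompose g s - X"
    and e5: "\<not> Q^2 dvd pcompose P g"
  proof (cases "Q^2 dvd pcompose P g0")
    case False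
    then show ?thesis using that d1 d2 d3 d4 by blast
  next
    case True
    let ?g = "g0 + Q"
    have qg: "Q dvd ?g - g0" by simp
    have "Q dvd pcompose P ?g - pcompose P g0" by (rule comp_cong[OF qg])
    then have f1: "Q dvd pcompose P ?g" using d1 by (metis diff_add_cancel dvd_add)
    have "Q dvd pcompose s ?g - pcompose s g0" by (rule comp_cong[OF qg])
    then have f3: "Q dvd pcompose s ?g - X" using d3 by (metis diff_add_eq_diff_diff_swap diff_add_cancel dvd_add)
    have "pcompose ?g s - X = (pcompose g0 s - X) + pcompose Q s" by (simp add: pcompose_add)
    moreover have "P dvd (pcompose g0 s - X) + pcompose Q s" using d4 d2 by (rule dvd_add)
    ultimately have f4: "P dvd pcompose ?g s - X" by (simp add: algebra_simps)
    have f5: "\<not> Q^2 dvd pcompose P ?g"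
    proof
      assume h: "Q^2 dvd pcompose P ?g"
      have t: "Q^2 dvd pcompose P ?g - pcompose P g0 - Q * pcompose (pderiv P) g0"
        by (rule taylor)
      have "Q * pcompose (pderiv P) g0 = (pcompose P ?g - pcompose P g0) -
          (pcompose P ?g - pcompose P g0 - Q * pcompose (pderiv P) g0)" by simp
      also have "Q^2 dvd \<dots>" by (rule dvd_diff[OF dvd_diff[OF h True] t])
      finally have "Q * Q dvd Q * pcompose (pderiv P) g0" by (simp add: power2_eq_square)
      then have "Q dvd pcompose (pderiv P) g0" using Q0 by simp
      then show False using nQd by simp
    qed
    show ?thesis using that[OF f1 d2 f3 f4 f5] .
  qed
  obtain u where u: "pcompose P g = Q * u" using e1 by (auto elim: dvdE)
  have nQu: "\<not> Q dvd u"
  proof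
    assume "Q dvd u"
    then have "Q * Q dvd Q * u" by simp
    then show False using e5 u by (simp add: power2_eq_square)
  qed
  obtain x y where xy: "x * u + y * Q = 1" using bezout_irr[OF irrQ nQu] by blast
  have uv: "(u * x) mod Q = 1 mod Q"
  proof -
    have "u * x - 1 = - (y * Q)" using xy by (simp add: algebra_simps)
    then have "Q dvd u * x - 1" by simp
    then show ?thesis by (simp add: mod_eq_dvd_iff)
  qed
  have uvj: "Q dvd (u * x) ^ j - 1" for j :: nat
  proof -
    have "((u * x) ^ j) mod Q = (1 ^ j) mod Q"
      by (metis power_mod uv)
    then show ?thesis by (simp add: mod_eq_dvd_iff)
  qed
  have surj: "\<exists>b. Q ^ j dvd a - pcompose b g" for j a
  proof (induction j arbitrary: a)
    case 0
    then show ?case by simp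
  next
    case (Suc j)
    obtain b where "Q ^ j dvd a - pcompose b g" using Suc.IH by blast
    then obtain e where e: "a - pcompose b g = Q ^ j * e" by (auto elim: dvdE)
    define W where "W = pcompose (x ^ j * e) (pcompose s g)"
    define b' where "b' = b + P ^ j * pcompose (x ^ j * e) s"
    have "pcompose b' g = pcompose b g + (pcompose P g) ^ j * W"
      unfolding b'_def W_def by (simp add: pcompose_add pcompose_mult comp_power pcompose_assoc)
    then have A: "a - pcompose b' g = Q ^ j * (e - u ^ j * W)"
      using e u by (simp add: algebra_simps power_mult_distrib)
    have "Q dvd W - pcompose (x ^ j * e) X" unfolding W_def by (rule comp_cong[OF e3])
    then have W1: "Q dvd W - x ^ j * e" unfolding X_def by simp
    have "e - u ^ j * W = - (((u * x) ^ j - 1) * e) - u ^ j * (W - x ^ j * e)"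
      by (simp add: algebra_simps power_mult_distrib)
    moreover have "Q dvd - (((u * x) ^ j - 1) * e) - u ^ j * (W - x ^ j * e)"
      using uvj W1 by (simp add: dvd_diff)
    ultimately have "Q dvd e - u ^ j * W" by simp
    then have "Q ^ j * Q dvd Q ^ j * (e - u ^ j * W)" by simp
    then have "Q ^ Suc j dvd a - pcompose b' g" using A by (simp add: mult.commute)
    then show ?case by blast
  qed
  have inj: "j \<le> k \<Longrightarrow> Q ^ k dvd pcompose b g \<Longrightarrow> P ^ j dvd b" for j b
  proof (induction j)
    case 0
    then show ?case by simp
  next
    case (Suc j)
    then have "P ^ j dvd b" by simp
    then obtain e where e: "b = P ^ j * e" by (auto elim: dvdE)
    have "pcompose b g = Q ^ j * (u ^ j * pcompose e g)"
      using e u by (simp add: pcompose_mult comp_power power_mult_distrib)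
    moreover have "Q ^ Suc j dvd pcompose b g"
      using Suc.prems by (meson le_imp_power_dvd dvd_trans)
    ultimately have "Q ^ j * Q dvd Q ^ j * (u ^ j * pcompose e g)" by (simp add: mult.commute)
    then have "Q dvd u ^ j * pcompose e g" using Q0 by simp
    moreover have "\<not> Q dvd u ^ j" using nQu irr_prime_power[OF irrQ] by blast
    ultimately have "Q dvd pcompose e g" using irr_prime[OF irrQ] by blast
    then obtain z where z: "pcompose e g = Q * z" by (auto elim: dvdE)
    have "pcompose (pcompose e g) s = pcompose Q s * pcompose z s" by (simp add: z pcompose_mult)
    then have A: "P dvd pcompose e (pcompose g s)" using e2 by (simp add: pcompose_assoc)
    have B: "P dvd pcompose e (pcompose g s) - pcompose e X" by (rule comp_cong[OF e4])
    have "P dvd pcompose e X" using dvd_diff[OF A B] by simp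
    then have "P dvd e" unfolding X_def by simp
    then show ?case using e by (simp add: mult.commute)
  qed
  define F where "F = (\<lambda>r. pcompose r g mod Q ^ k)"
  have hk: "Q ^ k dvd pcompose (P ^ k) g" using u by (simp add: comp_power power_mult_distrib)
  have homs: "(\<forall>r\<in>qrep (P^k). \<forall>s\<in>qrep (P^k). F (r + s) = F r + F s) \<and>
     (\<forall>r\<in>qrep (P^k). \<forall>s\<in>qrep (P^k). F ((r * s) mod (P^k)) = (F r * F s) mod (Q^k)) \<and>
     F (1 mod (P^k)) = 1 mod (Q^k) \<and>
     (\<forall>c. \<forall>r\<in>qrep (P^k). F (smult c r) = smult c (F r))"
    unfolding F_def by (rule hom_props[OF hk])
  have injF: "inj_on F (qrep (P ^ k))"
  proof (rule inj_onI)
    fix r r' assume r: "r \<in> qrep (P ^ k)" and r': "r' \<in> qrep (P ^ k)" and eq: "F r = F r'"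
    have "Q ^ k dvd pcompose r g - pcompose r' g" using eq unfolding F_def by (simp add: mod_eq_dvd_iff)
    then have "Q ^ k dvd pcompose (r - r') g" by (simp add: pcompose_diff)
    then have "P ^ k dvd r - r'" using inj by blast
    then have "r mod P ^ k = r' mod P ^ k" by (simp add: mod_eq_dvd_iff)
    then show "r = r'" using r r' unfolding qrep_def by simp
  qed
  have imgF: "F ` qrep (P ^ k) = qrep (Q ^ k)"
  proof
    show "F ` qrep (P ^ k) \<subseteq> qrep (Q ^ k)" unfolding F_def qrep_def by auto
  next
    show "qrep (Q ^ k) \<subseteq> F ` qrep (P ^ k)"
    proof
      fix t assume t: "t \<in> qrep (Q ^ k)"
      obtain b where b: "Q ^ k dvd t - pcompose b g" using surj by blast
      have "F (b mod P ^ k) = pcompose b g mod Q ^ k" unfolding F_def by (rule hmod[OF hk])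
      also have "\<dots> = t mod Q ^ k" using b by (simp add: mod_eq_dvd_iff dvd_diff_commute)
      also have "\<dots> = t" using t unfolding qrep_def by simp
      finally show "t \<in> F ` qrep (P ^ k)" using qrep_mod by (metis imageI)
    qed
  qed
  have "kalg_iso (P ^ k) (Q ^ k) F"
    unfolding kalg_iso_def bij_betw_def using injF imgF homs by blast
  then show ?thesis unfolding quot_alg_isomorphic_def by blast
qed

theorem mainTheorem7:
  fixes P1 P2 :: "'a::field poly" and k :: nat
  assumes "irreducible P1" and "irreducible P2"
    and "pderiv P1 \<noteq> 0" and "pderiv P2 \<noteq> 0"
    and "k \<ge> 1"
  shows "quot_alg_isomorphic (P1 ^ k) (P2 ^ k) \<longleftrightarrow> quot_alg_isomorphic P1 P2"
proof
  assume "quot_alg_isomorphic (P1 ^ k) (P2 ^ k)"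
  then obtain g s where "isodata (P1 ^ k) (P2 ^ k) g s"
    using iso_extract unfolding quot_alg_isomorphic_def by blast
  then have "isodata P1 P2 g s" using descent assms by blast
  then have "quot_alg_isomorphic (P1 ^ 1) (P2 ^ 1)" using construct assms by blast
  then show "quot_alg_isomorphic P1 P2" by simp
next
  assume "quot_alg_isomorphic P1 P2"
  then obtain g s where "isodata P1 P2 g s"
    using iso_extract unfolding quot_alg_isomorphic_def by blast
  then show "quot_alg_isomorphic (P1 ^ k) (P2 ^ k)" using construct assms by blast
qed

end
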